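(* Assume the ranking mechanism is consistent. Then for every $n\ge1$, every CDF $K_n$ and every $t\in\mathbb R$, $$\mathbb V\big(F_{n;jps}(t)\big)=\mathbb E(W_1^2J_1)\sum_{r=1}^H\mathbb V\big(K_n(t-X_{[r]})\big)+\frac{H}{H-1}\,\mathbb V(W_1)\sum_{r=1}^H\Big(\mathbb E\big(K_n(t-X_{[r]})\big)-\mathbb E\big(K_n(t-X)\big)\Big)^2 ,$$ and equivalently $$\mathbb V\big(F_{n;jps}(t)\big)=H\,\mathbb E(W_1^2J_1)\,\mathbb V\big(K_n(t-X)\big)-\Big[\mathbb E(W_1^2J_1)-\frac{H}{H-1}\mathbb V(W_1)\Big]\sum_{r=1}^H\Big(\mathbb E\big(K_n(t-X_{[r]})\big)-\mathbb E\big(K_n(t-X)\big)\Big)^2 .$$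
   Context: Setting (judgment post stratification, JPS). Fix an integer set size $H\ge 2$ and a sample size $n\ge 1$. A JPS sample is a collection of $n$ i.i.d. pairs $(X_1,R_1),\dots,(X_n,R_n)$, where $R_i\in\{1,\dots,H\}$ with $P(R_i=r)=1/H$ for each $r$, and conditionally on $R_i=r$ the real random variable $X_i$ has CDF $F_{[r]}$; $X_{[r]}$ denotes a random variable with CDF $F_{[r]}$. Let $F$ be the population CDF and $X$ a random variable with CDF $F$. The ranking mechanism is called consistent if $F(t)=\frac1H\sum_{r=1}^H F_{[r]}(t)$ for all $t\in\mathbb R$ (so each $X_i$ has marginal CDF $F$). Define $I_{ir}=\mathbb I(R_i=r)$, $N_r=\sum_{i=1}^n I_{ir}$, $J_r=1/N_r$ if $N_r>0$ and $J_r=0$ otherwise, $d_n=\sum_{r=1}^H\mathbb I(N_r>0)$, and $W_r=\mathbb I(N_r>0)/d_n$. Given a CDF $K_n$ on $\mathbb R$, define $F_{n;[r]}(t)=\frac1{N_r}\sum_{i=1}^n K_n(t-X_i)I_{ir}$ if $N_r>0$ and $F_{n;[r]}(t)=0$ otherwise, and the JPS estimator $F_{n;jps}(t)=\sum_{r=1}^H W_rF_{n;[r]}(t)$. *)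

theory Defs
  imports "HOL-Probability.Probability"
begin

definition is_cdf :: "(real \<Rightarrow> real) \<Rightarrow> bool" where
  "is_cdf K \<longleftrightarrow> mono K \<and> (\<forall>x. continuous (at_right x) K) \<and>
     (K \<longlongrightarrow> 0) at_bot \<and> (K \<longlongrightarrow> 1) at_top"

text \<open>JPS quantities for a sample of size n with ranks R i (i < n) and values X i.
  Indices i range over 0..n-1; ranks r over 1..H.\<close>

definition jps_I :: "(nat \<Rightarrow> 'a \<Rightarrow> nat) \<Rightarrow> nat \<Rightarrow> nat \<Rightarrow> 'a \<Rightarrow> real" where
  "jps_I R i r \<omega> = (if R i \<omega> = r then 1 else 0)"

definition jps_N :: "nat \<Rightarrow> (nat \<Rightarrow> 'a \<Rightarrow> nat) \<Rightarrow> nat \<Rightarrow> 'a \<Rightarrow> nat" where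
  "jps_N n R r \<omega> = card {i. i < n \<and> R i \<omega> = r}"

definition jps_J :: "nat \<Rightarrow> (nat \<Rightarrow> 'a \<Rightarrow> nat) \<Rightarrow> nat \<Rightarrow> 'a \<Rightarrow> real" where
  "jps_J n R r \<omega> = (if jps_N n R r \<omega> > 0 then 1 / real (jps_N n R r \<omega>) else 0)"

definition jps_d :: "nat \<Rightarrow> nat \<Rightarrow> (nat \<Rightarrow> 'a \<Rightarrow> nat) \<Rightarrow> 'a \<Rightarrow> nat" where
  "jps_d H n R \<omega> = card {r \<in> {1..H}. jps_N n R r \<omega> > 0}"

definition jps_W :: "nat \<Rightarrow> nat \<Rightarrow> (nat \<Rightarrow> 'a \<Rightarrow> nat) \<Rightarrow> nat \<Rightarrow> 'a \<Rightarrow> real" where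
  "jps_W H n R r \<omega> = (if jps_N n R r \<omega> > 0 then 1 else 0) / real (jps_d H n R \<omega>)"

definition jps_Fr :: "nat \<Rightarrow> (real \<Rightarrow> real) \<Rightarrow> (nat \<Rightarrow> 'a \<Rightarrow> real) \<Rightarrow> (nat \<Rightarrow> 'a \<Rightarrow> nat)
    \<Rightarrow> nat \<Rightarrow> real \<Rightarrow> 'a \<Rightarrow> real" where
  "jps_Fr n K X R r t \<omega> =
     (if jps_N n R r \<omega> > 0
      then (1 / real (jps_N n R r \<omega>)) * (\<Sum>i<n. K (t - X i \<omega>) * jps_I R i r \<omega>)
      else 0)"

definition jps_F :: "nat \<Rightarrow> nat \<Rightarrow> (real \<Rightarrow> real) \<Rightarrow> (nat \<Rightarrow> 'a \<Rightarrow> real) \<Rightarrow> (nat \<Rightarrow> 'a \<Rightarrow> nat)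
    \<Rightarrow> real \<Rightarrow> 'a \<Rightarrow> real" where
  "jps_F H n K X R t \<omega> = (\<Sum>r=1..H. jps_W H n R r \<omega> * jps_Fr n K X R r t \<omega>)"

end

theory Submission
  imports Defs
begin


lemma alg1:
  fixes h q cq S2 MM :: real
  assumes h: "h > 1" and cq: "cq = (1/h - q)/(h-1)"
  shows "q*S2 + cq*(MM^2 - S2) - (MM/h)^2 = h/(h-1)*(q - (1/h)^2)*(S2 - MM^2/h)"
  using h unfolding cq by (simp add: field_simps power2_eq_square)

lemma alg2:
  fixes h VF AA SS S2 MM v :: real
  assumes h: "h > 1" and VF: "VF = AA * (SS - S2) + h / (h - 1) * v * (S2 - MM\<^sup>2 / h)"
  shows "VF = AA * (SS - S2) + h / (h - 1) * v * (S2 - MM\<^sup>2 / h)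
       \<and> VF = h * AA * (SS / h - (MM / h)\<^sup>2) - (AA - h / (h - 1) * v) * (S2 - MM\<^sup>2 / h)"
  using h unfolding VF by (simp add: field_simps power2_eq_square)

locale jps = prob_space M for M :: "'a measure" +
  fixes H n :: nat
    and X :: "nat \<Rightarrow> 'a \<Rightarrow> real" and R :: "nat \<Rightarrow> 'a \<Rightarrow> nat"
    and \<mu> :: "nat \<Rightarrow> real measure" and \<mu>X :: "real measure"
    and K :: "real \<Rightarrow> real" and t :: real
  assumes H: "H \<ge> 2" and n: "n \<ge> 1"
    and dist_r: "\<And>r. r \<in> {1..H} \<Longrightarrow> real_distribution (\<mu> r)"
    and distX: "real_distribution \<mu>X"
    and consistent: "\<And>s. cdf \<mu>X s = (1 / real H) * (\<Sum>r=1..H. cdf (\<mu> r) s)"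
    and indep: "indep_vars (\<lambda>i. borel \<Otimes>\<^sub>M count_space UNIV)
                   (\<lambda>i \<omega>. (X i \<omega>, R i \<omega>)) {..<n}"
    and R_range: "\<And>i \<omega>. i < n \<Longrightarrow> \<omega> \<in> space M \<Longrightarrow> R i \<omega> \<in> {1..H}"
    and R_unif: "\<And>i r. i < n \<Longrightarrow> r \<in> {1..H} \<Longrightarrow>
                   measure M {\<omega> \<in> space M. R i \<omega> = r} = 1 / real H"
    and X_cond: "\<And>i r s. i < n \<Longrightarrow> r \<in> {1..H} \<Longrightarrow>
                   measure M {\<omega> \<in> space M. X i \<omega> \<le> s \<and> R i \<omega> = r}
                   = cdf (\<mu> r) s * (1 / real H)"
    and K: "is_cdf K"
begin

lemma K_meas[measurable]: "K \<in> borel_measurable borel"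
  using K by (auto simp: is_cdf_def intro: borel_measurable_mono)

lemma K_nonneg: "0 \<le> K x"
proof -
  have "((\<lambda>_. K x) \<longlongrightarrow> K x) at_bot" by simp
  moreover have "\<forall>\<^sub>F y in at_bot. K y \<le> K x"
    using K unfolding is_cdf_def mono_def eventually_at_bot_linorder by blast
  moreover have "(K \<longlongrightarrow> 0) at_bot" using K by (simp add: is_cdf_def)
  ultimately show ?thesis by (intro tendsto_le[of at_bot _ _ K 0]) auto
qed

lemma K_le1: "K x \<le> 1"
proof -
  have "((\<lambda>_. K x) \<longlongrightarrow> K x) at_top" by simp
  moreover have "\<forall>\<^sub>F y in at_top. K x \<le> K y"
    using K unfolding is_cdf_def mono_def eventually_at_top_linorder by blast
  moreover have "(K \<longlongrightarrow> 1) at_top" using K by (simp add: is_cdf_def)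
  ultimately show ?thesis by (intro tendsto_le[of at_top K 1 _ "K x"]) auto
qed

lemma rv_pair: "i < n \<Longrightarrow> (\<lambda>\<omega>. (X i \<omega>, R i \<omega>)) \<in> measurable M (borel \<Otimes>\<^sub>M count_space UNIV)"
  using indep by (auto simp: indep_vars_def)

lemma X_meas[measurable]: "i < n \<Longrightarrow> X i \<in> borel_measurable M"
  using measurable_compose[OF rv_pair measurable_fst] by (simp add: comp_def)

lemma R_meas[measurable]: "i < n \<Longrightarrow> R i \<in> measurable M (count_space UNIV)"
  using measurable_compose[OF rv_pair measurable_snd] by (simp add: comp_def)

lemma Rset[measurable]: "i < n \<Longrightarrow> {\<omega> \<in> space M. R i \<omega> = r} \<in> sets M"
  by measurable


lemma Hpos: "real H > 0" using H by simp

lemma base: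
  assumes k: "k < n" and r: "r \<in> {1..H}"
  shows "integrable M (\<lambda>\<omega>. if R k \<omega> = r then K (t - X k \<omega>) ^ e else 0)"
    and "integral\<^sup>L M (\<lambda>\<omega>. if R k \<omega> = r then K (t - X k \<omega>) ^ e else 0)
          = integral\<^sup>L (\<mu> r) (\<lambda>x. K (t - x) ^ e) / real H"
proof -
  define B0 where "B0 = {\<omega> \<in> space M. R k \<omega> = r}"
  have B0[measurable]: "B0 \<in> sets M" unfolding B0_def using k by measurable
  define g where "g \<omega> = (if R k \<omega> = r then real H else 0)" for \<omega>
  have g[measurable]: "g \<in> borel_measurable M" unfolding g_def using k by measurable
  define Q where "Q = density M g"
  have sQ[simp]: "sets Q = sets M" "space Q = space M" by (simp_all add: Q_def)
  have mB0: "measure M B0 = 1 / real H" unfolding B0_def using R_unif k r by simp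
  have eQ: "emeasure Q A = ennreal (real H * measure M (A \<inter> B0))" if A: "A \<in> sets M" for A
  proof -
    have "emeasure Q A = (\<integral>\<^sup>+ \<omega>. ennreal (g \<omega>) * indicator A \<omega> \<partial>M)"
      unfolding Q_def using A by (intro emeasure_density) auto
    also have "\<dots> = (\<integral>\<^sup>+ \<omega>. ennreal (real H) * indicator (A \<inter> B0) \<omega> \<partial>M)"
      by (intro nn_integral_cong) (auto simp: g_def B0_def indicator_def)
    also have "\<dots> = ennreal (real H) * emeasure M (A \<inter> B0)"
      using A by (intro nn_integral_cmult_indicator) auto
    also have "\<dots> = ennreal (real H * measure M (A \<inter> B0))"
      by (simp add: emeasure_eq_measure ennreal_mult)
    finally show ?thesis .
  qed
  have "emeasure Q (space Q) = 1"
    using eQ[of "space M"] mB0 Hpos by (simp add: Int_absorb1 sets.sets_into_space)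
  then have PQ: "prob_space Q" by (intro prob_spaceI)
  define D where "D = distr Q borel (X k)"
  have XQ[measurable]: "X k \<in> borel_measurable Q" using k unfolding Q_def by simp
  have RD: "real_distribution D"
    unfolding D_def real_distribution_def using prob_space.prob_space_distr[OF PQ XQ] by (simp add: real_distribution_axioms_def)
  have "cdf D s = cdf (\<mu> r) s" for s
  proof -
    have "cdf D s = measure Q (X k -` {..s} \<inter> space M)"
      unfolding cdf_def D_def by (subst measure_distr) auto
    also have "\<dots> = real H * measure M ((X k -` {..s} \<inter> space M) \<inter> B0)"
      using eQ[of "X k -` {..s} \<inter> space M"] k Hpos
      by (simp add: measure_def)
    also have "(X k -` {..s} \<inter> space M) \<inter> B0 = {\<omega> \<in> space M. X k \<omega> \<le> s \<and> R k \<omega> = r}"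
      unfolding B0_def by auto
    finally show ?thesis using X_cond[OF k r, of s] Hpos by simp
  qed
  then have D: "D = \<mu> r" using RD dist_r[OF r] by (intro cdf_unique) auto
  have int: "integrable M (\<lambda>\<omega>. if R k \<omega> = r then K (t - X k \<omega>) ^ e else 0)"
  proof (rule finite_measure.integrable_const_bound[where B=1])
    show "finite_measure M" by unfold_locales
    show "AE x in M. norm (if R k x = r then K (t - X k x) ^ e else 0) \<le> 1"
      using K_nonneg K_le1 by (auto intro!: power_le_one)
    show "(\<lambda>\<omega>. if R k \<omega> = r then K (t - X k \<omega>) ^ e else 0) \<in> borel_measurable M"
      using k by measurable
  qed
  then show "integrable M (\<lambda>\<omega>. if R k \<omega> = r then K (t - X k \<omega>) ^ e else 0)" .
  have "integral\<^sup>L (\<mu> r) (\<lambda>x. K (t - x) ^ e) = integral\<^sup>L Q (\<lambda>\<omega>. K (t - X k \<omega>) ^ e)"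
    unfolding D[symmetric] D_def by (subst integral_distr) auto
  also have "\<dots> = integral\<^sup>L M (\<lambda>\<omega>. g \<omega> * K (t - X k \<omega>) ^ e)"
    unfolding Q_def using k by (subst integral_density) (auto simp: g_def)
  also have "\<dots> = integral\<^sup>L M (\<lambda>\<omega>. real H * (if R k \<omega> = r then K (t - X k \<omega>) ^ e else 0))"
    by (intro Bochner_Integration.integral_cong) (auto simp: g_def)
  also have "\<dots> = real H * integral\<^sup>L M (\<lambda>\<omega>. if R k \<omega> = r then K (t - X k \<omega>) ^ e else 0)"
    by simp
  finally show "integral\<^sup>L M (\<lambda>\<omega>. if R k \<omega> = r then K (t - X k \<omega>) ^ e else 0)
          = integral\<^sup>L (\<mu> r) (\<lambda>x. K (t - x) ^ e) / real H" using Hpos by simp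
qed


definition G :: "(nat \<Rightarrow> nat) \<Rightarrow> (nat \<Rightarrow> nat) \<Rightarrow> 'a \<Rightarrow> real" where
  "G e \<rho> \<omega> = (\<Prod>k<n. if R k \<omega> = \<rho> k then K (t - X k \<omega>) ^ e k else 0)"

lemma core:
  assumes \<rho>: "\<And>k. k < n \<Longrightarrow> \<rho> k \<in> {1..H}"
  shows "integrable M (G e \<rho>)"
    and "integral\<^sup>L M (G e \<rho>) = (\<Prod>k<n. integral\<^sup>L (\<mu> (\<rho> k)) (\<lambda>x. K (t - x) ^ e k) / real H)"
proof -
  define f where "f k p = (if snd p = \<rho> k then K (t - fst p) ^ e k else 0)" for k and p :: "real \<times> nat"
  have fm: "f k \<in> borel_measurable (borel \<Otimes>\<^sub>M count_space UNIV)" for k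
    unfolding f_def by measurable
  have ind: "indep_vars (\<lambda>_. borel) (\<lambda>k \<omega>. f k (X k \<omega>, R k \<omega>)) {..<n}"
    by (rule indep_vars_compose2[OF indep fm])
  have fe: "f k (X k \<omega>, R k \<omega>) = (if R k \<omega> = \<rho> k then K (t - X k \<omega>) ^ e k else 0)" for k \<omega>
    by (simp add: f_def)
  have Ge: "G e \<rho> = (\<lambda>\<omega>. \<Prod>k<n. f k (X k \<omega>, R k \<omega>))"
    by (simp add: G_def fe fun_eq_iff)
  have ints: "integrable M (\<lambda>\<omega>. f k (X k \<omega>, R k \<omega>))" if "k \<in> {..<n}" for k
    using base(1)[of k "\<rho> k" "e k"] that \<rho> by (simp add: fe)
  show "integrable M (G e \<rho>)" unfolding Ge
    by (rule indep_vars_integrable[OF _ ind ints]) auto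
  have "integral\<^sup>L M (G e \<rho>) = (\<Prod>k<n. integral\<^sup>L M (\<lambda>\<omega>. f k (X k \<omega>, R k \<omega>)))"
    unfolding Ge by (rule indep_vars_lebesgue_integral[OF _ ind ints]) auto
  also have "\<dots> = (\<Prod>k<n. integral\<^sup>L (\<mu> (\<rho> k)) (\<lambda>x. K (t - x) ^ e k) / real H)"
    by (intro prod.cong refl) (use base(2) \<rho> in \<open>auto simp: fe\<close>)
  finally show "integral\<^sup>L M (G e \<rho>) = (\<Prod>k<n. integral\<^sup>L (\<mu> (\<rho> k)) (\<lambda>x. K (t - x) ^ e k) / real H)" .
qed


definition "P = PiE {..<n} (\<lambda>_. {1..H})"
definition "Rv \<omega> = restrict (\<lambda>i. R i \<omega>) {..<n}"

lemma Rv_P: "\<omega> \<in> space M \<Longrightarrow> Rv \<omega> \<in> P"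
  using R_range by (auto simp: P_def Rv_def)

lemma finP: "finite P" by (simp add: P_def finite_PiE)

lemma G_eq: "\<rho> \<in> P \<Longrightarrow> G e \<rho> \<omega> = (if Rv \<omega> = \<rho> then (\<Prod>k<n. K (t - X k \<omega>) ^ e k) else 0)"
proof (cases "Rv \<omega> = \<rho>")
  case True
  assume "\<rho> \<in> P"
  then have "\<forall>k<n. R k \<omega> = \<rho> k" using True by (auto simp: Rv_def)
  then show ?thesis using True by (auto simp: G_def intro!: prod.cong)
next
  case False
  assume "\<rho> \<in> P"
  then have exr: "\<rho> i = undefined" if "\<not> i < n" for i
    using that by (auto simp: P_def PiE_def extensional_def)
  obtain i where i: "Rv \<omega> i \<noteq> \<rho> i" using False by (auto simp: fun_eq_iff)
  have k1: "i < n"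
  proof (rule ccontr)
    assume "\<not> i < n"
    then show False using i exr[of i] by (simp add: Rv_def)
  qed
  have k2: "R i \<omega> \<noteq> \<rho> i" using i k1 by (simp add: Rv_def)
  note k = k1 k2
  have "(\<Prod>k<n. if R k \<omega> = \<rho> k then K (t - X k \<omega>) ^ e k else 0) = 0"
    using k by (intro prod_zero) (simp_all, blast)
  then show ?thesis using False by (simp add: G_def)
qed

definition "mm r = integral\<^sup>L (\<mu> r) (\<lambda>x. K (t - x))"
definition "ss r = integral\<^sup>L (\<mu> r) (\<lambda>x. K (t - x) ^ 2)"
definition "p = (1 / real H) ^ n"

lemma L:
  fixes \<phi> :: "(nat \<Rightarrow> nat) \<Rightarrow> real"
  shows "integrable M (\<lambda>\<omega>. (\<Prod>k<n. K (t - X k \<omega>) ^ e k) * \<phi> (Rv \<omega>))"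
    and "integral\<^sup>L M (\<lambda>\<omega>. (\<Prod>k<n. K (t - X k \<omega>) ^ e k) * \<phi> (Rv \<omega>))
       = (\<Sum>\<rho>\<in>P. \<phi> \<rho> * (\<Prod>k<n. integral\<^sup>L (\<mu> (\<rho> k)) (\<lambda>x. K (t - x) ^ e k) / real H))"
proof -
  have \<rho>: "\<rho> \<in> P \<Longrightarrow> k < n \<Longrightarrow> \<rho> k \<in> {1..H}" for \<rho> k by (simp add: P_def PiE_iff)
  have eq: "(\<Prod>k<n. K (t - X k \<omega>) ^ e k) * \<phi> (Rv \<omega>) = (\<Sum>\<rho>\<in>P. \<phi> \<rho> * G e \<rho> \<omega>)"
    if "\<omega> \<in> space M" for \<omega>
  proof -
    have "(\<Sum>\<rho>\<in>P. \<phi> \<rho> * G e \<rho> \<omega>) = (\<Sum>\<rho>\<in>P. if Rv \<omega> = \<rho> then \<phi> \<rho> * (\<Prod>k<n. K (t - X k \<omega>) ^ e k) else 0)"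
      by (rule sum.cong[OF refl], subst G_eq) auto
    also have "\<dots> = \<phi> (Rv \<omega>) * (\<Prod>k<n. K (t - X k \<omega>) ^ e k)"
      using Rv_P[OF that] finP by (subst sum.delta') (simp_all only: if_True)
    finally show ?thesis by simp
  qed
  have intG: "integrable M (G e \<rho>)" if "\<rho> \<in> P" for \<rho>
    by (rule core(1)) (rule \<rho>[OF that])
  have ints: "integrable M (\<lambda>\<omega>. \<Sum>\<rho>\<in>P. \<phi> \<rho> * G e \<rho> \<omega>)"
    apply (rule Bochner_Integration.integrable_sum)
    apply (rule integrable_mult_right)
    apply (rule intG)
    apply assumption
    done
  show "integrable M (\<lambda>\<omega>. (\<Prod>k<n. K (t - X k \<omega>) ^ e k) * \<phi> (Rv \<omega>))"
  proof -
    have "integrable M (\<lambda>\<omega>. (\<Prod>k<n. K (t - X k \<omega>) ^ e k) * \<phi> (Rv \<omega>)) = integrable M (\<lambda>\<omega>. \<Sum>\<rho>\<in>P. \<phi> \<rho> * G e \<rho> \<omega>)"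
      by (rule Bochner_Integration.integrable_cong) (simp_all add: eq)
    then show ?thesis using ints by simp
  qed
  have "integral\<^sup>L M (\<lambda>\<omega>. (\<Prod>k<n. K (t - X k \<omega>) ^ e k) * \<phi> (Rv \<omega>))
      = integral\<^sup>L M (\<lambda>\<omega>. \<Sum>\<rho>\<in>P. \<phi> \<rho> * G e \<rho> \<omega>)"
    by (intro Bochner_Integration.integral_cong refl) (simp add: eq)
  also have "\<dots> = (\<Sum>\<rho>\<in>P. \<phi> \<rho> * integral\<^sup>L M (G e \<rho>))"
    by (subst Bochner_Integration.integral_sum) (simp_all add: intG)
  also have "\<dots> = (\<Sum>\<rho>\<in>P. \<phi> \<rho> * (\<Prod>k<n. integral\<^sup>L (\<mu> (\<rho> k)) (\<lambda>x. K (t - x) ^ e k) / real H))"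
    by (intro sum.cong refl arg_cong2[where f="(*)"] core(2)) (erule \<rho>)
  finally show "integral\<^sup>L M (\<lambda>\<omega>. (\<Prod>k<n. K (t - X k \<omega>) ^ e k) * \<phi> (Rv \<omega>))
       = (\<Sum>\<rho>\<in>P. \<phi> \<rho> * (\<Prod>k<n. integral\<^sup>L (\<mu> (\<rho> k)) (\<lambda>x. K (t - x) ^ e k) / real H))" .
qed


lemma prob_mu: "\<rho> \<in> P \<Longrightarrow> k < n \<Longrightarrow> prob_space (\<mu> (\<rho> k))"
  using dist_r by (auto simp: P_def PiE_iff real_distribution_def)

lemma fac:
  assumes "\<rho> \<in> P"
  shows "(\<Prod>k<n. integral\<^sup>L (\<mu> (\<rho> k)) (\<lambda>x. K (t - x) ^ e k) / real H)
       = p * (\<Prod>k<n. if e k = 0 then 1 else integral\<^sup>L (\<mu> (\<rho> k)) (\<lambda>x. K (t - x) ^ e k))"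
proof -
  have "(\<Prod>k<n. integral\<^sup>L (\<mu> (\<rho> k)) (\<lambda>x. K (t - x) ^ e k) / real H)
      = (\<Prod>k<n. (1 / real H) * (if e k = 0 then 1 else integral\<^sup>L (\<mu> (\<rho> k)) (\<lambda>x. K (t - x) ^ e k)))"
    using prob_space.prob_space[OF prob_mu[OF assms]] by (intro prod.cong refl) auto
  also have "\<dots> = p * (\<Prod>k<n. if e k = 0 then 1 else integral\<^sup>L (\<mu> (\<rho> k)) (\<lambda>x. K (t - x) ^ e k))"
    by (simp add: prod.distrib p_def power_one_over prod_dividef)
  finally show ?thesis .
qed

lemma L0:
  fixes \<phi> :: "(nat \<Rightarrow> nat) \<Rightarrow> real"
  shows "integrable M (\<lambda>\<omega>. \<phi> (Rv \<omega>))"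
    and "integral\<^sup>L M (\<lambda>\<omega>. \<phi> (Rv \<omega>)) = (\<Sum>\<rho>\<in>P. p * \<phi> \<rho>)"
  using L[of "\<lambda>_. 0" \<phi>] fac[of _ "\<lambda>_. 0"] by (simp_all add: mult.commute cong: sum.cong)

lemma prod_e1: "i < n \<Longrightarrow> (\<Prod>k<n. (y k :: real) ^ (if k = i then 1 else 0)) = y i"
proof -
  assume i: "i < n"
  have "(\<Prod>k<n. y k ^ (if k = i then 1 else 0)) = (\<Prod>k<n. if k = i then y k else 1)"
    by (intro prod.cong) auto
  also have "\<dots> = y i" using i by (simp add: prod.delta)
  finally show ?thesis .
qed

lemma L1:
  fixes \<phi> :: "(nat \<Rightarrow> nat) \<Rightarrow> real"
  assumes i: "i < n"
  shows "integrable M (\<lambda>\<omega>. K (t - X i \<omega>) * \<phi> (Rv \<omega>))"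
    and "integral\<^sup>L M (\<lambda>\<omega>. K (t - X i \<omega>) * \<phi> (Rv \<omega>)) = (\<Sum>\<rho>\<in>P. p * \<phi> \<rho> * mm (\<rho> i))"
proof -
  let ?e = "\<lambda>k. if k = i then 1 else 0 :: nat"
  have pe: "(\<Prod>k<n. K (t - X k \<omega>) ^ ?e k) = K (t - X i \<omega>)" for \<omega>
    using prod_e1[OF i] .
  have f1: "(\<Prod>k<n. if ?e k = 0 then 1 else integral\<^sup>L (\<mu> (\<rho> k)) (\<lambda>x. K (t - x) ^ ?e k)) = mm (\<rho> i)" for \<rho>
  proof -
    have "(\<Prod>k<n. if ?e k = 0 then 1 else integral\<^sup>L (\<mu> (\<rho> k)) (\<lambda>x. K (t - x) ^ ?e k))
        = (\<Prod>k<n. if k = i then mm (\<rho> k) else 1)"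
      by (intro prod.cong) (auto simp: mm_def)
    also have "\<dots> = mm (\<rho> i)" using i by (simp add: prod.delta)
    finally show ?thesis .
  qed
  show "integrable M (\<lambda>\<omega>. K (t - X i \<omega>) * \<phi> (Rv \<omega>))"
    using L(1)[of ?e \<phi>] by (simp only: pe)
  show "integral\<^sup>L M (\<lambda>\<omega>. K (t - X i \<omega>) * \<phi> (Rv \<omega>)) = (\<Sum>\<rho>\<in>P. p * \<phi> \<rho> * mm (\<rho> i))"
    using L(2)[of ?e \<phi>] by (simp only: pe fac f1 mult.assoc mult.left_commute cong: sum.cong)
qed


lemma L2:
  fixes \<phi> :: "(nat \<Rightarrow> nat) \<Rightarrow> real"
  assumes i: "i < n" and j: "j < n"
  shows "integrable M (\<lambda>\<omega>. K (t - X i \<omega>) * K (t - X j \<omega>) * \<phi> (Rv \<omega>))"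
    and "integral\<^sup>L M (\<lambda>\<omega>. K (t - X i \<omega>) * K (t - X j \<omega>) * \<phi> (Rv \<omega>))
         = (\<Sum>\<rho>\<in>P. p * \<phi> \<rho> * (if i = j then ss (\<rho> i) else mm (\<rho> i) * mm (\<rho> j)))"
proof -
  let ?e = "\<lambda>k. (if k = i then 1 else 0) + (if k = j then 1 else 0) :: nat"
  have pe: "(\<Prod>k<n. K (t - X k \<omega>) ^ ?e k) = K (t - X i \<omega>) * K (t - X j \<omega>)" for \<omega>
    by (simp only: power_add prod.distrib prod_e1[OF i] prod_e1[OF j])
  have f1: "(\<Prod>k<n. if ?e k = 0 then 1 else integral\<^sup>L (\<mu> (\<rho> k)) (\<lambda>x. K (t - x) ^ ?e k))
      = (if i = j then ss (\<rho> i) else mm (\<rho> i) * mm (\<rho> j))" for \<rho>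
  proof (cases "i = j")
    case True
    have "(\<Prod>k<n. if ?e k = 0 then 1 else integral\<^sup>L (\<mu> (\<rho> k)) (\<lambda>x. K (t - x) ^ ?e k))
        = (\<Prod>k<n. if k = i then ss (\<rho> k) else 1)"
      using True by (intro prod.cong) (auto simp: ss_def power2_eq_square)
    also have "\<dots> = ss (\<rho> i)" using i by (simp add: prod.delta)
    finally show ?thesis using True by simp
  next
    case False
    have "(\<Prod>k<n. if ?e k = 0 then 1 else integral\<^sup>L (\<mu> (\<rho> k)) (\<lambda>x. K (t - x) ^ ?e k))
        = (\<Prod>k<n. (if k = i then mm (\<rho> k) else 1) * (if k = j then mm (\<rho> k) else 1))"
      using False by (intro prod.cong) (auto simp: mm_def)
    also have "\<dots> = mm (\<rho> i) * mm (\<rho> j)" using i j by (simp add: prod.distrib prod.delta)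
    finally show ?thesis using False by simp
  qed
  show "integrable M (\<lambda>\<omega>. K (t - X i \<omega>) * K (t - X j \<omega>) * \<phi> (Rv \<omega>))"
    using L(1)[of ?e \<phi>] by (simp only: pe)
  show "integral\<^sup>L M (\<lambda>\<omega>. K (t - X i \<omega>) * K (t - X j \<omega>) * \<phi> (Rv \<omega>))
         = (\<Sum>\<rho>\<in>P. p * \<phi> \<rho> * (if i = j then ss (\<rho> i) else mm (\<rho> i) * mm (\<rho> j)))"
    using L(2)[of ?e \<phi>] by (simp only: pe fac f1 mult.assoc mult.left_commute cong: sum.cong)
qed


definition "Nr \<rho> r = card {i. i < n \<and> \<rho> i = r}"
definition "dd \<rho> = card {r \<in> {1..H}. Nr \<rho> r > 0}"
definition "Wr \<rho> r = (if Nr \<rho> r > 0 then 1 else 0) / real (dd \<rho>)"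
definition "Jr \<rho> r = (if Nr \<rho> r > 0 then 1 / real (Nr \<rho> r) else 0)"
definition "cc \<rho> r = Wr \<rho> r * Jr \<rho> r"

lemma N_link: "jps_N n R r \<omega> = Nr (Rv \<omega>) r"
proof -
  have "{i. i < n \<and> R i \<omega> = r} = {i. i < n \<and> Rv \<omega> i = r}" by (auto simp: Rv_def)
  then show ?thesis by (simp add: jps_N_def Nr_def)
qed

lemma d_link: "jps_d H n R \<omega> = dd (Rv \<omega>)"
  by (simp add: jps_d_def dd_def N_link)

lemma W_link: "jps_W H n R r \<omega> = Wr (Rv \<omega>) r"
  by (simp add: jps_W_def Wr_def N_link d_link)

lemma J_link: "jps_J n R r \<omega> = Jr (Rv \<omega>) r"
  by (simp add: jps_J_def Jr_def N_link)

lemma group: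
  assumes "\<rho> \<in> P"
  shows "(\<Sum>i<n. g (\<rho> i)) = (\<Sum>r=1..H. real (Nr \<rho> r) * (g r :: real))"
proof -
  have "(\<Sum>r=1..H. \<Sum>i\<in>{x \<in> {..<n}. \<rho> x = r}. g (\<rho> i)) = (\<Sum>i<n. g (\<rho> i))"
    using assms by (intro sum.group) (auto simp: P_def PiE_iff)
  moreover have "(\<Sum>i\<in>{x \<in> {..<n}. \<rho> x = r}. g (\<rho> i)) = real (Nr \<rho> r) * g r" for r
  proof -
    have "(\<Sum>i\<in>{x \<in> {..<n}. \<rho> x = r}. g (\<rho> i)) = (\<Sum>i\<in>{x \<in> {..<n}. \<rho> x = r}. g r)"
      by (intro sum.cong) auto
    also have "\<dots> = real (Nr \<rho> r) * g r" by (simp add: Nr_def)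
    finally show ?thesis .
  qed
  ultimately show ?thesis by (metis (no_types, lifting) sum.cong)
qed

lemma Nr_pos_set: "\<rho> \<in> P \<Longrightarrow> r \<in> {1..H} \<or> Nr \<rho> r = 0"
  by (auto simp: Nr_def P_def PiE_iff) 

lemma dd_pos: assumes "\<rho> \<in> P" shows "dd \<rho> > 0"
proof -
  have "\<rho> 0 \<in> {1..H}" using assms n by (auto simp: P_def PiE_iff)
  moreover have "Nr \<rho> (\<rho> 0) > 0" unfolding Nr_def
  proof (rule card_gt_0_iff[THEN iffD2])
    have "0 \<in> {i. i < n \<and> \<rho> i = \<rho> 0}" using n by auto
    then show "{i. i < n \<and> \<rho> i = \<rho> 0} \<noteq> {} \<and> finite {i. i < n \<and> \<rho> i = \<rho> 0}" by auto
  qed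
  ultimately have "{r \<in> {1..H}. Nr \<rho> r > 0} \<noteq> {}" by auto
  then show ?thesis unfolding dd_def by (subst card_gt_0_iff) auto
qed

lemma sumW: assumes "\<rho> \<in> P" shows "(\<Sum>r=1..H. Wr \<rho> r) = 1"
proof -
  have "(\<Sum>r=1..H. Wr \<rho> r) = (\<Sum>r=1..H. (if Nr \<rho> r > 0 then 1 else 0)) / real (dd \<rho>)"
    by (simp add: Wr_def sum_divide_distrib)
  also have "(\<Sum>r=1..H. (if Nr \<rho> r > 0 then 1 else 0) :: real) = real (dd \<rho>)"
  proof -
    have e: "{r \<in> {1..H}. Nr \<rho> r > 0} = {1..H} \<inter> {r. Nr \<rho> r > 0}" by auto
    show ?thesis by (simp only: sum.If_cases finite_atLeastAtMost dd_def e) simp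
  qed
  finally show ?thesis using dd_pos[OF assms] by simp
qed

lemma Nr0: "Nr \<rho> r = 0 \<Longrightarrow> i < n \<Longrightarrow> \<rho> i \<noteq> r"
  unfolding Nr_def by (subst (asm) card_eq_0_iff) auto

lemma NJ: "real (Nr \<rho> r) * Jr \<rho> r = (if Nr \<rho> r > 0 then 1 else 0)"
  by (simp add: Jr_def)

lemma W0: "Nr \<rho> r = 0 \<Longrightarrow> Wr \<rho> r = 0"
  by (simp add: Wr_def)

lemma group1: "\<rho> \<in> P \<Longrightarrow> (\<Sum>i<n. cc \<rho> (\<rho> i) * v (\<rho> i)) = (\<Sum>r=1..H. Wr \<rho> r * v r)"
  by (subst group[where g="\<lambda>r. cc \<rho> r * v r"]) (auto intro!: sum.cong simp: cc_def W0 Jr_def)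

lemma group2: "\<rho> \<in> P \<Longrightarrow> (\<Sum>i<n. (cc \<rho> (\<rho> i))\<^sup>2 * v (\<rho> i)) = (\<Sum>r=1..H. (Wr \<rho> r)\<^sup>2 * Jr \<rho> r * v r)"
  by (subst group[where g="\<lambda>r. (cc \<rho> r)\<^sup>2 * v r"]) (auto intro!: sum.cong simp: cc_def W0 Jr_def power2_eq_square)

lemma F_link:
  assumes "\<omega> \<in> space M"
  shows "jps_F H n K X R t \<omega> = (\<Sum>i<n. K (t - X i \<omega>) * cc (Rv \<omega>) (Rv \<omega> i))"
proof -
  have "jps_F H n K X R t \<omega> = (\<Sum>r=1..H. \<Sum>i<n. K (t - X i \<omega>) * (if R i \<omega> = r then cc (Rv \<omega>) r else 0))"
    unfolding jps_F_def
  proof (intro sum.cong refl)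
    fix r
    show "jps_W H n R r \<omega> * jps_Fr n K X R r t \<omega> =
          (\<Sum>i<n. K (t - X i \<omega>) * (if R i \<omega> = r then cc (Rv \<omega>) r else 0))"
    proof (cases "Nr (Rv \<omega>) r = 0")
      case True
      then have "i < n \<Longrightarrow> R i \<omega> \<noteq> r" for i using Nr0[OF True, of i] by (simp add: Rv_def)
      then show ?thesis using True by (auto simp: jps_Fr_def W_link N_link intro!: sum.neutral)
    next
      case False
      then show ?thesis
        by (auto simp: jps_Fr_def W_link N_link cc_def Jr_def jps_I_def sum_distrib_left
               intro!: sum.cong)
    qed
  qed
  also have "\<dots> = (\<Sum>i<n. \<Sum>r=1..H. K (t - X i \<omega>) * (if R i \<omega> = r then cc (Rv \<omega>) r else 0))"
    by (rule sum.swap)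
  also have "\<dots> = (\<Sum>i<n. K (t - X i \<omega>) * cc (Rv \<omega>) (Rv \<omega> i))"
  proof (intro sum.cong refl)
    fix i assume i: "i \<in> {..<n}"
    have "(\<Sum>r=1..H. K (t - X i \<omega>) * (if R i \<omega> = r then cc (Rv \<omega>) r else 0))
        = (\<Sum>r=1..H. if R i \<omega> = r then K (t - X i \<omega>) * cc (Rv \<omega>) r else 0)"
      by (intro sum.cong) auto
    also have "\<dots> = K (t - X i \<omega>) * cc (Rv \<omega>) (R i \<omega>)"
      using R_range[of i \<omega>] i assms by (subst sum.delta') auto
    finally show "(\<Sum>r=1..H. K (t - X i \<omega>) * (if R i \<omega> = r then cc (Rv \<omega>) r else 0))
        = K (t - X i \<omega>) * cc (Rv \<omega>) (Rv \<omega> i)" using i by (simp add: Rv_def)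
  qed
  finally show ?thesis .
qed


definition "Sm \<rho> = (\<Sum>r=1..H. Wr \<rho> r * mm r)"
definition "Fa \<omega> = (\<Sum>i<n. K (t - X i \<omega>) * cc (Rv \<omega>) (Rv \<omega> i))"

lemma Fa_int: "integrable M Fa"
  unfolding Fa_def
  by (intro Bochner_Integration.integrable_sum L1(1)[where \<phi>="\<lambda>\<rho>. cc \<rho> (\<rho> _)"]) auto

lemma EFa: "integral\<^sup>L M Fa = (\<Sum>\<rho>\<in>P. p * Sm \<rho>)"
proof -
  have "integral\<^sup>L M Fa = (\<Sum>i<n. integral\<^sup>L M (\<lambda>\<omega>. K (t - X i \<omega>) * cc (Rv \<omega>) (Rv \<omega> i)))"
    unfolding Fa_def
    by (intro Bochner_Integration.integral_sum L1(1)[where \<phi>="\<lambda>\<rho>. cc \<rho> (\<rho> _)"]) auto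
  also have "\<dots> = (\<Sum>i<n. \<Sum>\<rho>\<in>P. p * cc \<rho> (\<rho> i) * mm (\<rho> i))"
    by (intro sum.cong refl L1(2)[where \<phi>="\<lambda>\<rho>. cc \<rho> (\<rho> _)"]) auto
  also have "\<dots> = (\<Sum>\<rho>\<in>P. p * (\<Sum>i<n. cc \<rho> (\<rho> i) * mm (\<rho> i)))"
    by (subst sum.swap) (simp add: sum_distrib_left mult.assoc)
  also have "\<dots> = (\<Sum>\<rho>\<in>P. p * Sm \<rho>)"
    by (intro sum.cong refl) (simp add: group1 Sm_def)
  finally show ?thesis .
qed

lemma sq_expand:
  fixes a m s :: "nat \<Rightarrow> real"
  shows "(\<Sum>i<n. \<Sum>j<n. a i * a j * (if i = j then s i else m i * m j))
       = (\<Sum>i<n. (a i)\<^sup>2 * (s i - (m i)\<^sup>2)) + (\<Sum>i<n. a i * m i)\<^sup>2"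
proof -
  have "(\<Sum>i<n. \<Sum>j<n. a i * a j * (if i = j then s i else m i * m j))
      = (\<Sum>i<n. \<Sum>j<n. (a i * m i) * (a j * m j) + (if i = j then (a i)\<^sup>2 * (s i - (m i)\<^sup>2) else 0))"
    by (intro sum.cong refl) (auto simp: power2_eq_square algebra_simps)
  also have "\<dots> = (\<Sum>i<n. \<Sum>j<n. (a i * m i) * (a j * m j)) + (\<Sum>i<n. (a i)\<^sup>2 * (s i - (m i)\<^sup>2))"
    by (simp add: sum.distrib)
  also have "(\<Sum>i<n. \<Sum>j<n. (a i * m i) * (a j * m j)) = (\<Sum>i<n. a i * m i)\<^sup>2"
    by (simp add: power2_eq_square sum_product)
  finally show ?thesis by simp
qed

lemma swap3: "(\<Sum>i\<in>A. \<Sum>j\<in>B. \<Sum>k\<in>C. f i j k) = (\<Sum>k\<in>C. \<Sum>i\<in>A. \<Sum>j\<in>B. f i j k)"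
proof -
  have "(\<Sum>i\<in>A. \<Sum>j\<in>B. \<Sum>k\<in>C. f i j k) = (\<Sum>i\<in>A. \<Sum>k\<in>C. \<Sum>j\<in>B. f i j k)"
    by (rule sum.cong[OF refl], rule sum.swap)
  also have "\<dots> = (\<Sum>k\<in>C. \<Sum>i\<in>A. \<Sum>j\<in>B. f i j k)" by (rule sum.swap)
  finally show ?thesis .
qed

definition "Q2 \<rho> = (\<Sum>r=1..H. (Wr \<rho> r)\<^sup>2 * Jr \<rho> r * (ss r - (mm r)\<^sup>2)) + (Sm \<rho>)\<^sup>2"

lemma VarFa: "integral\<^sup>L M (\<lambda>\<omega>. (Fa \<omega> - integral\<^sup>L M Fa)\<^sup>2)
   = (\<Sum>\<rho>\<in>P. p * Q2 \<rho>) - (integral\<^sup>L M Fa)\<^sup>2"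
proof -
  define c where "c = integral\<^sup>L M Fa"
  define Y where "Y i \<omega> = K (t - X i \<omega>)" for i \<omega>
  define a where "a i \<rho> = cc \<rho> (\<rho> i)" for i \<rho>
  have Fa': "Fa \<omega> = (\<Sum>i<n. Y i \<omega> * a i (Rv \<omega>))" for \<omega> by (simp add: Fa_def Y_def a_def)
  have eq: "(Fa \<omega> - c)\<^sup>2 = (\<Sum>i<n. \<Sum>j<n. Y i \<omega> * Y j \<omega> * (a i (Rv \<omega>) * a j (Rv \<omega>)))
      - (\<Sum>i<n. Y i \<omega> * (2 * c * a i (Rv \<omega>))) + c\<^sup>2" for \<omega>
    unfolding Fa' power2_diff
    by (simp add: power2_eq_square sum_product sum_distrib_left algebra_simps)
  have i2: "integrable M (\<lambda>\<omega>. Y i \<omega> * Y j \<omega> * (a i (Rv \<omega>) * a j (Rv \<omega>)))" if "i < n" "j < n" for i j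
    using L2(1)[OF that, of "\<lambda>\<rho>. a i \<rho> * a j \<rho>"] by (simp add: Y_def)
  have i1: "integrable M (\<lambda>\<omega>. Y i \<omega> * (2 * c * a i (Rv \<omega>)))" if "i < n" for i
    using L1(1)[OF that, of "\<lambda>\<rho>. 2 * c * a i \<rho>"] by (simp add: Y_def)
  have "integral\<^sup>L M (\<lambda>\<omega>. (Fa \<omega> - c)\<^sup>2)
     = (\<Sum>i<n. \<Sum>j<n. integral\<^sup>L M (\<lambda>\<omega>. Y i \<omega> * Y j \<omega> * (a i (Rv \<omega>) * a j (Rv \<omega>))))
       - (\<Sum>i<n. integral\<^sup>L M (\<lambda>\<omega>. Y i \<omega> * (2 * c * a i (Rv \<omega>)))) + c\<^sup>2"
  proof -
    have I2: "integrable M (\<lambda>\<omega>. \<Sum>i<n. \<Sum>j<n. Y i \<omega> * Y j \<omega> * (a i (Rv \<omega>) * a j (Rv \<omega>)))"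
      by (intro Bochner_Integration.integrable_sum i2) auto
    have I1: "integrable M (\<lambda>\<omega>. \<Sum>i<n. Y i \<omega> * (2 * c * a i (Rv \<omega>)))"
      by (intro Bochner_Integration.integrable_sum i1) auto
    have "integral\<^sup>L M (\<lambda>\<omega>. (Fa \<omega> - c)\<^sup>2) = integral\<^sup>L M (\<lambda>\<omega>. (\<Sum>i<n. \<Sum>j<n. Y i \<omega> * Y j \<omega> * (a i (Rv \<omega>) * a j (Rv \<omega>)))
      - (\<Sum>i<n. Y i \<omega> * (2 * c * a i (Rv \<omega>))) + c\<^sup>2)" unfolding eq ..
    also have "\<dots> = integral\<^sup>L M (\<lambda>\<omega>. (\<Sum>i<n. \<Sum>j<n. Y i \<omega> * Y j \<omega> * (a i (Rv \<omega>) * a j (Rv \<omega>)))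
      - (\<Sum>i<n. Y i \<omega> * (2 * c * a i (Rv \<omega>)))) + integral\<^sup>L M (\<lambda>\<omega>. c\<^sup>2)"
      using I1 I2 by (intro Bochner_Integration.integral_add) auto
    also have "integral\<^sup>L M (\<lambda>\<omega>. (\<Sum>i<n. \<Sum>j<n. Y i \<omega> * Y j \<omega> * (a i (Rv \<omega>) * a j (Rv \<omega>)))
      - (\<Sum>i<n. Y i \<omega> * (2 * c * a i (Rv \<omega>))))
      = integral\<^sup>L M (\<lambda>\<omega>. \<Sum>i<n. \<Sum>j<n. Y i \<omega> * Y j \<omega> * (a i (Rv \<omega>) * a j (Rv \<omega>)))
       - integral\<^sup>L M (\<lambda>\<omega>. \<Sum>i<n. Y i \<omega> * (2 * c * a i (Rv \<omega>)))"
      using I2 I1 by (rule Bochner_Integration.integral_diff)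
    also have "integral\<^sup>L M (\<lambda>\<omega>. \<Sum>i<n. \<Sum>j<n. Y i \<omega> * Y j \<omega> * (a i (Rv \<omega>) * a j (Rv \<omega>)))
       = (\<Sum>i<n. \<Sum>j<n. integral\<^sup>L M (\<lambda>\<omega>. Y i \<omega> * Y j \<omega> * (a i (Rv \<omega>) * a j (Rv \<omega>))))"
      by (subst Bochner_Integration.integral_sum, (intro Bochner_Integration.integrable_sum i2; simp))
         (intro sum.cong refl Bochner_Integration.integral_sum i2, auto)
    also have "integral\<^sup>L M (\<lambda>\<omega>. \<Sum>i<n. Y i \<omega> * (2 * c * a i (Rv \<omega>)))
       = (\<Sum>i<n. integral\<^sup>L M (\<lambda>\<omega>. Y i \<omega> * (2 * c * a i (Rv \<omega>))))"
      by (intro Bochner_Integration.integral_sum i1) auto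
    also have "integral\<^sup>L M (\<lambda>\<omega>. c\<^sup>2) = c\<^sup>2" by (simp add: prob_space)
    finally show ?thesis .
  qed
  also have "\<dots> = (\<Sum>i<n. \<Sum>j<n. \<Sum>\<rho>\<in>P. p * (a i \<rho> * a j \<rho>) * (if i = j then ss (\<rho> i) else mm (\<rho> i) * mm (\<rho> j)))
       - (\<Sum>i<n. \<Sum>\<rho>\<in>P. p * (2 * c * a i \<rho>) * mm (\<rho> i)) + c\<^sup>2"
  proof -
    have e2: "integral\<^sup>L M (\<lambda>\<omega>. Y i \<omega> * Y j \<omega> * (a i (Rv \<omega>) * a j (Rv \<omega>)))
      = (\<Sum>\<rho>\<in>P. p * (a i \<rho> * a j \<rho>) * (if i = j then ss (\<rho> i) else mm (\<rho> i) * mm (\<rho> j)))"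
      if "i < n" "j < n" for i j
      using L2(2)[OF that, of "\<lambda>\<rho>. a i \<rho> * a j \<rho>"] by (simp add: Y_def)
    have e1: "integral\<^sup>L M (\<lambda>\<omega>. Y i \<omega> * (2 * c * a i (Rv \<omega>)))
      = (\<Sum>\<rho>\<in>P. p * (2 * c * a i \<rho>) * mm (\<rho> i))" if "i < n" for i
      using L1(2)[OF that, of "\<lambda>\<rho>. 2 * c * a i \<rho>"] by (simp add: Y_def)
    show ?thesis
      by (intro arg_cong2[where f="(+)"] arg_cong2[where f="(-)"] sum.cong refl e1 e2) auto
  qed
  also have "\<dots> = (\<Sum>\<rho>\<in>P. p * (\<Sum>i<n. \<Sum>j<n. a i \<rho> * a j \<rho> * (if i = j then ss (\<rho> i) else mm (\<rho> i) * mm (\<rho> j))))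
       - 2 * c * (\<Sum>\<rho>\<in>P. p * (\<Sum>i<n. a i \<rho> * mm (\<rho> i))) + c\<^sup>2"
  proof -
    have p1: "(\<Sum>i<n. \<Sum>j<n. \<Sum>\<rho>\<in>P. p * (a i \<rho> * a j \<rho>) * (if i = j then ss (\<rho> i) else mm (\<rho> i) * mm (\<rho> j)))
       = (\<Sum>\<rho>\<in>P. p * (\<Sum>i<n. \<Sum>j<n. a i \<rho> * a j \<rho> * (if i = j then ss (\<rho> i) else mm (\<rho> i) * mm (\<rho> j))))"
      by (subst swap3) (simp add: sum_distrib_left mult.assoc)
    have p2: "(\<Sum>i<n. \<Sum>\<rho>\<in>P. p * (2 * c * a i \<rho>) * mm (\<rho> i))
       = 2 * c * (\<Sum>\<rho>\<in>P. p * (\<Sum>i<n. a i \<rho> * mm (\<rho> i)))"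
      by (subst sum.swap) (simp add: sum_distrib_left mult_ac)
    show ?thesis by (simp only: p1 p2)
  qed
  also have "\<dots> = (\<Sum>\<rho>\<in>P. p * Q2 \<rho>) - 2 * c * (\<Sum>\<rho>\<in>P. p * Sm \<rho>) + c\<^sup>2"
    by (intro arg_cong2[where f="(+)"] arg_cong2[where f="(-)"] arg_cong2[where f="(*)"] refl sum.cong)
       (auto simp: sq_expand Q2_def a_def group1 group2[where v="\<lambda>r. ss r - (mm r)\<^sup>2"] Sm_def)
  also have "\<dots> = (\<Sum>\<rho>\<in>P. p * Q2 \<rho>) - c\<^sup>2"
    by (simp add: EFa[symmetric] c_def power2_eq_square)
  finally show ?thesis by (simp add: c_def)
qed


definition "perm \<tau> \<rho> = (\<lambda>i. if i < n then \<tau> (\<rho> i) else undefined)"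

context
  fixes \<tau> :: "nat \<Rightarrow> nat"
  assumes tau: "bij_betw \<tau> {1..H} {1..H}"
begin

lemma tau_inj: "inj_on \<tau> {1..H}" using tau by (simp add: bij_betw_def)
lemma tau_in: "r \<in> {1..H} \<Longrightarrow> \<tau> r \<in> {1..H}" using tau by (auto simp: bij_betw_def)

lemma perm_P: "bij_betw (perm \<tau>) P P"
proof -
  have sub: "perm \<tau> ` P \<subseteq> P"
    using tau_in by (auto simp: perm_def P_def PiE_iff extensional_def)
  have inj: "inj_on (perm \<tau>) P"
  proof (rule inj_onI)
    fix \<rho> \<rho>' assume "\<rho> \<in> P" "\<rho>' \<in> P" and eq: "perm \<tau> \<rho> = perm \<tau> \<rho>'"
    show "\<rho> = \<rho>'"
    proof
      fix i show "\<rho> i = \<rho>' i"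
      proof (cases "i < n")
        case True
        then have "\<tau> (\<rho> i) = \<tau> (\<rho>' i)" using eq by (auto simp: perm_def fun_eq_iff dest: spec[of _ i])
        moreover have "\<rho> i \<in> {1..H}" "\<rho>' i \<in> {1..H}" using \<open>\<rho> \<in> P\<close> \<open>\<rho>' \<in> P\<close> True
          by (auto simp: P_def PiE_iff)
        ultimately show ?thesis using tau_inj by (auto dest: inj_onD)
      next
        case False
        then show ?thesis using \<open>\<rho> \<in> P\<close> \<open>\<rho>' \<in> P\<close> by (auto simp: P_def PiE_iff extensional_def)
      qed
    qed
  qed
  show ?thesis unfolding bij_betw_def using endo_inj_surj[OF finP sub inj] inj by simp
qed

lemma perm_N: assumes "\<rho> \<in> P" "r \<in> {1..H}" shows "Nr (perm \<tau> \<rho>) (\<tau> r) = Nr \<rho> r"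
proof -
  have "{i. i < n \<and> perm \<tau> \<rho> i = \<tau> r} = {i. i < n \<and> \<rho> i = r}"
  proof (safe)
    fix i assume "i < n" "perm \<tau> \<rho> i = \<tau> r"
    moreover have "\<rho> i \<in> {1..H}" using assms \<open>i < n\<close> by (auto simp: P_def PiE_iff)
    ultimately show "\<rho> i = r" using tau_inj assms(2) by (auto simp: perm_def dest: inj_onD)
  qed (auto simp: perm_def)
  then show ?thesis by (simp add: Nr_def)
qed

lemma perm_d: assumes "\<rho> \<in> P" shows "dd (perm \<tau> \<rho>) = dd \<rho>"
proof -
  have "{r \<in> {1..H}. Nr (perm \<tau> \<rho>) r > 0} = \<tau> ` {r \<in> {1..H}. Nr \<rho> r > 0}"
  proof (safe)
    fix r' assume r': "r' \<in> {1..H}" "Nr (perm \<tau> \<rho>) r' > 0"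
    have "r' \<in> \<tau> ` {1..H}" using r' tau by (simp add: bij_betw_def)
    then obtain r where r: "r \<in> {1..H}" "r' = \<tau> r" by blast
    then show "r' \<in> \<tau> ` {r \<in> {1..H}. Nr \<rho> r > 0}" using r' perm_N[OF assms r(1)] by auto
  next
    fix r assume "r \<in> {1..H}" "Nr \<rho> r > 0"
    then show "\<tau> r \<in> {1..H}" "Nr (perm \<tau> \<rho>) (\<tau> r) > 0" using tau_in perm_N[OF assms] by auto
  qed
  moreover have "inj_on \<tau> {r \<in> {1..H}. Nr \<rho> r > 0}" using tau_inj by (rule inj_on_subset) auto
  ultimately show ?thesis by (simp add: dd_def card_image)
qed

lemma perm_W: "\<rho> \<in> P \<Longrightarrow> r \<in> {1..H} \<Longrightarrow> Wr (perm \<tau> \<rho>) (\<tau> r) = Wr \<rho> r"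
  by (simp add: Wr_def perm_N perm_d)

lemma perm_J: "\<rho> \<in> P \<Longrightarrow> r \<in> {1..H} \<Longrightarrow> Jr (perm \<tau> \<rho>) (\<tau> r) = Jr \<rho> r"
  by (simp add: Jr_def perm_N)

lemma sym_sum:
  assumes "a \<in> {1..H}" "b \<in> {1..H}"
  shows "(\<Sum>\<rho>\<in>P. FF (Wr \<rho> (\<tau> a)) (Jr \<rho> (\<tau> a)) (Wr \<rho> (\<tau> b)))
       = (\<Sum>\<rho>\<in>P. FF (Wr \<rho> a) (Jr \<rho> a) (Wr \<rho> b))"
proof -
  have "(\<Sum>\<rho>\<in>P. FF (Wr \<rho> (\<tau> a)) (Jr \<rho> (\<tau> a)) (Wr \<rho> (\<tau> b)))
     = (\<Sum>\<rho>\<in>P. FF (Wr (perm \<tau> \<rho>) (\<tau> a)) (Jr (perm \<tau> \<rho>) (\<tau> a)) (Wr (perm \<tau> \<rho>) (\<tau> b)))"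
    using sum.reindex_bij_betw[OF perm_P, of "\<lambda>\<rho>. FF (Wr \<rho> (\<tau> a)) (Jr \<rho> (\<tau> a)) (Wr \<rho> (\<tau> b))"]
    by simp
  also have "\<dots> = (\<Sum>\<rho>\<in>P. FF (Wr \<rho> a) (Jr \<rho> a) (Wr \<rho> b))"
    using assms by (intro sum.cong refl) (simp add: perm_W perm_J)
  finally show ?thesis .
qed

end

definition "sw a b x = (if x = a then b else if x = b then a else x)"

lemma sw_bij: "a \<in> {1..H} \<Longrightarrow> b \<in> {1..H} \<Longrightarrow> bij_betw (sw a b) {1..H} {1..H}"
proof -
  assume ab: "a \<in> {1..H}" "b \<in> {1..H}"
  have "sw a b ` {1..H} \<subseteq> {1..H}" using ab by (auto simp: sw_def)
  moreover have "inj_on (sw a b) {1..H}" by (auto simp: sw_def inj_on_def split: if_splits)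
  ultimately show ?thesis unfolding bij_betw_def using endo_inj_surj[of "{1..H}" "sw a b"] by simp
qed

lemma sym1:
  assumes r: "r \<in> {1..H}"
  shows "(\<Sum>\<rho>\<in>P. FF (Wr \<rho> r) (Jr \<rho> r)) = (\<Sum>\<rho>\<in>P. FF (Wr \<rho> 1) (Jr \<rho> 1))"
proof -
  have one: "(1::nat) \<in> {1..H}" using H by auto
  have "sw 1 r 1 = r" by (simp add: sw_def)
  then show ?thesis
    using sym_sum[OF sw_bij[OF one r] one one, of "\<lambda>w j _. FF w j"] by simp
qed

lemma sym2:
  assumes r: "r \<in> {1..H}" and s: "s \<in> {1..H}" and rs: "r \<noteq> s"
  shows "(\<Sum>\<rho>\<in>P. FF (Wr \<rho> r) (Wr \<rho> s)) = (\<Sum>\<rho>\<in>P. FF (Wr \<rho> 1) (Wr \<rho> 2))"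
proof -
  have one: "(1::nat) \<in> {1..H}" and two: "(2::nat) \<in> {1..H}" using H by auto
  define s1 where "s1 = sw 1 r s"
  have s1: "s1 \<in> {1..H}" "s1 \<noteq> 1" using r s rs one by (auto simp: s1_def sw_def)
  define \<tau> where "\<tau> = sw 1 r \<circ> sw 2 s1"
  have bij: "bij_betw \<tau> {1..H} {1..H}" unfolding \<tau>_def
    by (rule bij_betw_trans[OF sw_bij[OF two s1(1)] sw_bij[OF one r]])
  have t1: "\<tau> 1 = r" using s1 by (simp add: \<tau>_def sw_def)
  have t2: "\<tau> 2 = s" using s1 rs by (auto simp: \<tau>_def sw_def s1_def)
  show ?thesis
    using sym_sum[OF bij one two, of "\<lambda>w _ w'. FF w w'"] unfolding t1 t2 .
qed


lemma muX_eq: "\<mu>X = distr M borel (X 0)"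
proof -
  have n0: "0 < n" using n by simp
  have RD: "real_distribution (distr M borel (X 0))"
    unfolding real_distribution_def real_distribution_axioms_def
    using prob_space_distr[OF X_meas[OF n0]] by simp
  have "cdf (distr M borel (X 0)) s = cdf \<mu>X s" for s
  proof -
    have "cdf (distr M borel (X 0)) s = prob {\<omega> \<in> space M. X 0 \<omega> \<le> s}"
      unfolding cdf_def using n0 by (subst measure_distr) (auto intro!: arg_cong[where f=prob])
    also have "{\<omega> \<in> space M. X 0 \<omega> \<le> s} = (\<Union>r\<in>{1..H}. {\<omega> \<in> space M. X 0 \<omega> \<le> s \<and> R 0 \<omega> = r})"
      using R_range[OF n0] by auto
    also have "prob \<dots> = (\<Sum>r=1..H. prob {\<omega> \<in> space M. X 0 \<omega> \<le> s \<and> R 0 \<omega> = r})"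
      using n0 by (intro finite_measure_finite_Union) (auto simp: disjoint_family_on_def)
    also have "\<dots> = (\<Sum>r=1..H. cdf (\<mu> r) s * (1 / real H))"
      using X_cond[OF n0] by (intro sum.cong) auto
    also have "\<dots> = cdf \<mu>X s" using consistent[of s] by (simp add: sum_divide_distrib)
    finally show ?thesis .
  qed
  then show ?thesis using RD distX by (intro cdf_unique) auto
qed

lemma muX_int: "integral\<^sup>L \<mu>X (\<lambda>x. K (t - x) ^ e) = (\<Sum>r=1..H. integral\<^sup>L (\<mu> r) (\<lambda>x. K (t - x) ^ e)) / real H"
proof -
  have n0: "0 < n" using n by simp
  have "integral\<^sup>L \<mu>X (\<lambda>x. K (t - x) ^ e) = integral\<^sup>L M (\<lambda>\<omega>. K (t - X 0 \<omega>) ^ e)"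
    unfolding muX_eq using n0 by (subst integral_distr) auto
  also have "\<dots> = integral\<^sup>L M (\<lambda>\<omega>. \<Sum>r=1..H. if R 0 \<omega> = r then K (t - X 0 \<omega>) ^ e else 0)"
  proof (intro Bochner_Integration.integral_cong refl)
    fix \<omega> assume "\<omega> \<in> space M"
    then show "K (t - X 0 \<omega>) ^ e = (\<Sum>r=1..H. if R 0 \<omega> = r then K (t - X 0 \<omega>) ^ e else 0)"
      using R_range[OF n0] by (subst sum.delta') auto
  qed
  also have "\<dots> = (\<Sum>r=1..H. integral\<^sup>L M (\<lambda>\<omega>. if R 0 \<omega> = r then K (t - X 0 \<omega>) ^ e else 0))"
    using base(1)[OF n0] by (intro Bochner_Integration.integral_sum) auto
  also have "\<dots> = (\<Sum>r=1..H. integral\<^sup>L (\<mu> r) (\<lambda>x. K (t - x) ^ e) / real H)"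
    using base(2)[OF n0] by (intro sum.cong) auto
  finally show ?thesis by (simp add: sum_divide_distrib)
qed

lemma var_gen:
  assumes "real_distribution N"
  shows "prob_space.variance N (\<lambda>x. K (t - x)) = integral\<^sup>L N (\<lambda>x. K (t - x) ^ 2) - (integral\<^sup>L N (\<lambda>x. K (t - x)))\<^sup>2"
proof -
  interpret N: real_distribution N by fact
  have i: "integrable N (\<lambda>x. K (t - x) ^ e)" for e
  proof (rule N.integrable_const_bound[where B=1])
    show "AE x in N. norm (K (t - x) ^ e) \<le> 1"
      using K_nonneg K_le1 by (auto intro!: power_le_one)
    show "(\<lambda>x. K (t - x) ^ e) \<in> borel_measurable N" by measurable
  qed
  show ?thesis using i[of 1] i[of 2] by (subst N.variance_eq) auto
qed

lemma var_mu: "r \<in> {1..H} \<Longrightarrow> prob_space.variance (\<mu> r) (\<lambda>x. K (t - x)) = ss r - (mm r)\<^sup>2"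
  using var_gen[OF dist_r] by (simp add: ss_def mm_def)

lemma EX_mu: "integral\<^sup>L \<mu>X (\<lambda>x. K (t - x)) = (\<Sum>r=1..H. mm r) / real H"
  using muX_int[of 1] by (simp add: mm_def)

lemma varX: "prob_space.variance \<mu>X (\<lambda>x. K (t - x)) = (\<Sum>r=1..H. ss r) / real H - ((\<Sum>r=1..H. mm r) / real H)\<^sup>2"
  using var_gen[OF distX] muX_int[of 2] EX_mu by (simp add: ss_def)

lemma sumP: "(\<Sum>\<rho>\<in>P. p) = 1"
proof -
  have "card P = H ^ n" by (simp add: P_def card_PiE)
  then show ?thesis using Hpos by (simp add: p_def power_one_over)
qed


definition "AA = (\<Sum>\<rho>\<in>P. p * ((Wr \<rho> 1)\<^sup>2 * Jr \<rho> 1))"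
definition "qq = (\<Sum>\<rho>\<in>P. p * (Wr \<rho> 1)\<^sup>2)"
definition "cq = (\<Sum>\<rho>\<in>P. p * (Wr \<rho> 1 * Wr \<rho> 2))"
definition "e1 = (\<Sum>\<rho>\<in>P. p * Wr \<rho> 1)"

lemma one_in: "(1::nat) \<in> {1..H}" using H by auto

lemma eA: "r \<in> {1..H} \<Longrightarrow> (\<Sum>\<rho>\<in>P. p * ((Wr \<rho> r)\<^sup>2 * Jr \<rho> r)) = AA"
  unfolding AA_def using sym1[of r "\<lambda>w j. p * (w\<^sup>2 * j)"] by simp

lemma eE: "r \<in> {1..H} \<Longrightarrow> (\<Sum>\<rho>\<in>P. p * Wr \<rho> r) = e1"
  unfolding e1_def using sym1[of r "\<lambda>w j. p * w"] by simp

lemma eQ: "r \<in> {1..H} \<Longrightarrow> s \<in> {1..H} \<Longrightarrow> (\<Sum>\<rho>\<in>P. p * (Wr \<rho> r * Wr \<rho> s)) = (if r = s then qq else cq)"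
  unfolding qq_def cq_def
  using sym1[of r "\<lambda>w j. p * w\<^sup>2"] sym2[of r s "\<lambda>w w'. p * (w * w')"]
  by (auto simp: power2_eq_square)

lemma e1_val: "e1 = 1 / real H"
proof -
  have "(\<Sum>r=1..H. \<Sum>\<rho>\<in>P. p * Wr \<rho> r) = (\<Sum>\<rho>\<in>P. p * (\<Sum>r=1..H. Wr \<rho> r))"
    by (subst sum.swap) (simp add: sum_distrib_left)
  also have "\<dots> = (\<Sum>\<rho>\<in>P. p)" by (intro sum.cong refl) (simp add: sumW[simplified])
  also have "\<dots> = 1" by (rule sumP)
  finally have "real H * e1 = 1" using eE by simp
  then show ?thesis using Hpos by (simp add: field_simps)
qed

lemma cq_val: "cq = (1 / real H - qq) / (real H - 1)"
proof -
  have "(\<Sum>s=1..H. \<Sum>\<rho>\<in>P. p * (Wr \<rho> 1 * Wr \<rho> s)) = (\<Sum>\<rho>\<in>P. p * Wr \<rho> 1 * (\<Sum>s=1..H. Wr \<rho> s))"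
    by (subst sum.swap) (simp add: sum_distrib_left mult.assoc)
  also have "\<dots> = e1" unfolding e1_def by (intro sum.cong refl) (simp add: sumW[simplified])
  finally have a: "(\<Sum>s=1..H. (if 1 = s then qq else cq)) = e1"
    using eQ[OF one_in] by simp
  have "(\<Sum>s=1..H. (if 1 = s then qq else cq)) = (\<Sum>s\<in>{1..H}. (qq - cq) * (if 1 = s then 1 else 0) + cq)"
    by (intro sum.cong) auto
  also have "\<dots> = (qq - cq) + real H * cq"
    using one_in by (simp add: sum.distrib sum_distrib_left[symmetric] sum.delta)
  finally have "qq - cq + real H * cq = 1 / real H" using a e1_val by simp
  then show ?thesis using H by (simp add: field_simps)
qed

lemma sum_sq_dev: "(\<Sum>r=1..H. (mm r - MM / real H)\<^sup>2) = (\<Sum>r=1..H. (mm r)\<^sup>2) - MM\<^sup>2 / real H"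
  if "MM = (\<Sum>r=1..H. mm r)" for MM
proof -
  have "(\<Sum>r=1..H. (mm r - MM / real H)\<^sup>2) = (\<Sum>r=1..H. (mm r)\<^sup>2) - 2 * (MM / real H) * (\<Sum>r=1..H. mm r) + real H * (MM / real H)\<^sup>2"
    by (simp add: power2_diff sum.distrib sum_subtractf sum_distrib_left mult_ac)
  then show ?thesis using that Hpos by (simp add: field_simps power2_eq_square)
qed

lemma main:
  shows
    "prob_space.variance M (jps_F H n K X R t) =
       prob_space.expectation M (\<lambda>\<omega>. (jps_W H n R 1 \<omega>)\<^sup>2 * jps_J n R 1 \<omega>)
         * (\<Sum>r=1..H. prob_space.variance (\<mu> r) (\<lambda>x. K (t - x)))
     + real H / (real H - 1) * prob_space.variance M (jps_W H n R 1)
         * (\<Sum>r=1..H. (prob_space.expectation (\<mu> r) (\<lambda>x. K (t - x))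
                        - prob_space.expectation \<mu>X (\<lambda>x. K (t - x)))\<^sup>2)
   \<and> prob_space.variance M (jps_F H n K X R t) =
       real H * prob_space.expectation M (\<lambda>\<omega>. (jps_W H n R 1 \<omega>)\<^sup>2 * jps_J n R 1 \<omega>)
         * prob_space.variance \<mu>X (\<lambda>x. K (t - x))
     - (prob_space.expectation M (\<lambda>\<omega>. (jps_W H n R 1 \<omega>)\<^sup>2 * jps_J n R 1 \<omega>)
         - real H / (real H - 1) * prob_space.variance M (jps_W H n R 1))
       * (\<Sum>r=1..H. (prob_space.expectation (\<mu> r) (\<lambda>x. K (t - x))
                        - prob_space.expectation \<mu>X (\<lambda>x. K (t - x)))\<^sup>2)"
proof -
  define MM where "MM = (\<Sum>r=1..H. mm r)"
  define S2 where "S2 = (\<Sum>r=1..H. (mm r)\<^sup>2)"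
  define SS where "SS = (\<Sum>r=1..H. ss r)"
  have EA: "expectation (\<lambda>\<omega>. (jps_W H n R 1 \<omega>)\<^sup>2 * jps_J n R 1 \<omega>) = AA"
    using L0(2)[of "\<lambda>\<rho>. (Wr \<rho> 1)\<^sup>2 * Jr \<rho> 1"] by (simp add: W_link J_link AA_def)
  have Wf: "jps_W H n R 1 = (\<lambda>\<omega>. Wr (Rv \<omega>) 1)" by (simp add: fun_eq_iff W_link)
  have EW: "expectation (\<lambda>\<omega>. Wr (Rv \<omega>) 1) = e1"
    using L0(2)[of "\<lambda>\<rho>. Wr \<rho> 1"] by (simp add: e1_def)
  have VW: "prob_space.variance M (jps_W H n R 1) = qq - e1\<^sup>2"
  proof -
    have "prob_space.variance M (jps_W H n R 1) = (\<Sum>\<rho>\<in>P. p * (Wr \<rho> 1 - e1)\<^sup>2)"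
      unfolding Wf EW using L0(2)[of "\<lambda>\<rho>. (Wr \<rho> 1 - e1)\<^sup>2"] by simp
    also have "\<dots> = (\<Sum>\<rho>\<in>P. p * (Wr \<rho> 1)\<^sup>2 - 2 * e1 * (p * Wr \<rho> 1) + e1\<^sup>2 * p)"
      by (intro sum.cong refl) (simp add: power2_diff algebra_simps)
    also have "\<dots> = qq - 2 * e1 * e1 + e1\<^sup>2 * (\<Sum>\<rho>\<in>P. p)"
      by (simp only: sum.distrib sum_subtractf sum_distrib_left[symmetric]) (simp add: qq_def e1_def sum_distrib_left)
    also have "\<dots> = qq - e1\<^sup>2" using sumP by (simp add: power2_eq_square)
    finally show ?thesis .
  qed
  have VF0: "prob_space.variance M (jps_F H n K X R t) = (\<Sum>\<rho>\<in>P. p * Q2 \<rho>) - (integral\<^sup>L M Fa)\<^sup>2"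
  proof -
    have FF: "\<omega> \<in> space M \<Longrightarrow> jps_F H n K X R t \<omega> = Fa \<omega>" for \<omega> by (simp add: F_link Fa_def)
    have "expectation (jps_F H n K X R t) = integral\<^sup>L M Fa"
      by (intro Bochner_Integration.integral_cong refl FF)
    then have "prob_space.variance M (jps_F H n K X R t) = integral\<^sup>L M (\<lambda>\<omega>. (Fa \<omega> - integral\<^sup>L M Fa)\<^sup>2)"
      by (intro Bochner_Integration.integral_cong refl) (simp add: FF)
    then show ?thesis by (simp add: VarFa)
  qed
  have EF: "integral\<^sup>L M Fa = e1 * MM"
  proof -
    have "(\<Sum>\<rho>\<in>P. p * Sm \<rho>) = (\<Sum>r=1..H. mm r * (\<Sum>\<rho>\<in>P. p * Wr \<rho> r))"
      unfolding Sm_def sum_distrib_left by (subst sum.swap) (simp add: mult_ac)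
    also have "\<dots> = e1 * MM" using eE by (simp add: MM_def sum_distrib_left mult_ac)
    finally show ?thesis by (simp add: EFa)
  qed
  have PQ: "(\<Sum>\<rho>\<in>P. p * Q2 \<rho>) = AA * (SS - S2) + (qq * S2 + cq * (MM\<^sup>2 - S2))"
  proof -
    have t1: "(\<Sum>\<rho>\<in>P. p * (\<Sum>r=1..H. (Wr \<rho> r)\<^sup>2 * Jr \<rho> r * (ss r - (mm r)\<^sup>2)))
        = (\<Sum>r=1..H. (ss r - (mm r)\<^sup>2) * (\<Sum>\<rho>\<in>P. p * ((Wr \<rho> r)\<^sup>2 * Jr \<rho> r)))"
      unfolding sum_distrib_left by (subst sum.swap) (simp add: mult_ac)
    also have "\<dots> = (\<Sum>r=1..H. AA * (ss r - (mm r)\<^sup>2))"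
      by (intro sum.cong refl) (simp add: eA)
    also have "\<dots> = AA * (SS - S2)"
      unfolding SS_def S2_def by (simp add: sum_subtractf[symmetric] sum_distrib_left)
    finally have T1: "(\<Sum>\<rho>\<in>P. p * (\<Sum>r=1..H. (Wr \<rho> r)\<^sup>2 * Jr \<rho> r * (ss r - (mm r)\<^sup>2))) = AA * (SS - S2)" .
    have "(\<Sum>\<rho>\<in>P. p * (Sm \<rho>)\<^sup>2) = (\<Sum>\<rho>\<in>P. \<Sum>r=1..H. \<Sum>s=1..H. mm r * mm s * (p * (Wr \<rho> r * Wr \<rho> s)))"
      unfolding Sm_def power2_eq_square sum_product
      by (simp add: sum_distrib_left mult_ac)
    also have "\<dots> = (\<Sum>r=1..H. \<Sum>s=1..H. mm r * mm s * (\<Sum>\<rho>\<in>P. p * (Wr \<rho> r * Wr \<rho> s)))"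
      by (subst swap3[symmetric]) (simp add: sum_distrib_left)
    also have "\<dots> = (\<Sum>r=1..H. \<Sum>s=1..H. mm r * mm s * (if r = s then qq else cq))"
      by (intro sum.cong refl) (simp add: eQ)
    also have "\<dots> = (\<Sum>r=1..H. \<Sum>s=1..H. cq * (mm r * mm s) + (if r = s then (qq - cq) * (mm r)\<^sup>2 else 0))"
      by (intro sum.cong refl) (auto simp: power2_eq_square algebra_simps)
    also have "\<dots> = cq * MM\<^sup>2 + (qq - cq) * S2"
      by (simp add: sum.distrib sum_distrib_left[symmetric] MM_def S2_def power2_eq_square sum_product
          sum.delta)
    finally have T2: "(\<Sum>\<rho>\<in>P. p * (Sm \<rho>)\<^sup>2) = cq * MM\<^sup>2 + (qq - cq) * S2" .
    show ?thesis unfolding Q2_def using T1 T2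
      by (simp add: distrib_left sum.distrib algebra_simps)
  qed
  have VF: "prob_space.variance M (jps_F H n K X R t) = AA * (SS - S2) + (qq * S2 + cq * (MM\<^sup>2 - S2)) - (MM / real H)\<^sup>2"
    using VF0 PQ EF e1_val by simp
  have key: "qq * S2 + cq * (MM\<^sup>2 - S2) - (MM / real H)\<^sup>2
      = real H / (real H - 1) * (qq - (1 / real H)\<^sup>2) * (S2 - MM\<^sup>2 / real H)"
    using H by (intro alg1 cq_val) auto
  have sv: "(\<Sum>r=1..H. prob_space.variance (\<mu> r) (\<lambda>x. K (t - x))) = SS - S2"
    by (simp add: var_mu SS_def S2_def sum_subtractf)
  have sd: "(\<Sum>r=1..H. (prob_space.expectation (\<mu> r) (\<lambda>x. K (t - x))
                        - prob_space.expectation \<mu>X (\<lambda>x. K (t - x)))\<^sup>2) = S2 - MM\<^sup>2 / real H"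
    using sum_sq_dev[OF MM_def] by (simp add: EX_mu mm_def[symmetric] MM_def S2_def)
  have vx: "prob_space.variance \<mu>X (\<lambda>x. K (t - x)) = SS / real H - (MM / real H)\<^sup>2"
    by (simp add: varX SS_def MM_def)
  have first: "prob_space.variance M (jps_F H n K X R t) =
       AA * (SS - S2) + real H / (real H - 1) * (qq - e1\<^sup>2) * (S2 - MM\<^sup>2 / real H)"
    using VF key e1_val by simp
  have h1: "real H > 1" using H by simp
  show ?thesis
    unfolding EA VW sv sd vx
    by (rule alg2[OF h1 first])
qed

end

theorem mainTheorem2:
  fixes M :: "'a measure" and H n :: nat
    and X :: "nat \<Rightarrow> 'a \<Rightarrow> real" and R :: "nat \<Rightarrow> 'a \<Rightarrow> nat"
    and \<mu> :: "nat \<Rightarrow> real measure" and \<mu>X :: "real measure"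
    and K :: "real \<Rightarrow> real" and t :: real
  assumes "prob_space M"
    and H: "H \<ge> 2" and n: "n \<ge> 1"
    and dist_r: "\<And>r. r \<in> {1..H} \<Longrightarrow> real_distribution (\<mu> r)"
    and distX: "real_distribution \<mu>X"
    and consistent: "\<And>s. cdf \<mu>X s = (1 / real H) * (\<Sum>r=1..H. cdf (\<mu> r) s)"
    and indep: "prob_space.indep_vars M (\<lambda>i. borel \<Otimes>\<^sub>M count_space UNIV)
                   (\<lambda>i \<omega>. (X i \<omega>, R i \<omega>)) {..<n}"
    and R_range: "\<And>i \<omega>. i < n \<Longrightarrow> \<omega> \<in> space M \<Longrightarrow> R i \<omega> \<in> {1..H}"
    and R_unif: "\<And>i r. i < n \<Longrightarrow> r \<in> {1..H} \<Longrightarrow>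
                   measure M {\<omega> \<in> space M. R i \<omega> = r} = 1 / real H"
    and X_cond: "\<And>i r s. i < n \<Longrightarrow> r \<in> {1..H} \<Longrightarrow>
                   measure M {\<omega> \<in> space M. X i \<omega> \<le> s \<and> R i \<omega> = r}
                   = cdf (\<mu> r) s * (1 / real H)"
    and K: "is_cdf K"
  shows
    "prob_space.variance M (jps_F H n K X R t) =
       prob_space.expectation M (\<lambda>\<omega>. (jps_W H n R 1 \<omega>)\<^sup>2 * jps_J n R 1 \<omega>)
         * (\<Sum>r=1..H. prob_space.variance (\<mu> r) (\<lambda>x. K (t - x)))
     + real H / (real H - 1) * prob_space.variance M (jps_W H n R 1)
         * (\<Sum>r=1..H. (prob_space.expectation (\<mu> r) (\<lambda>x. K (t - x))
                        - prob_space.expectation \<mu>X (\<lambda>x. K (t - x)))\<^sup>2)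
   \<and> prob_space.variance M (jps_F H n K X R t) =
       real H * prob_space.expectation M (\<lambda>\<omega>. (jps_W H n R 1 \<omega>)\<^sup>2 * jps_J n R 1 \<omega>)
         * prob_space.variance \<mu>X (\<lambda>x. K (t - x))
     - (prob_space.expectation M (\<lambda>\<omega>. (jps_W H n R 1 \<omega>)\<^sup>2 * jps_J n R 1 \<omega>)
         - real H / (real H - 1) * prob_space.variance M (jps_W H n R 1))
       * (\<Sum>r=1..H. (prob_space.expectation (\<mu> r) (\<lambda>x. K (t - x))
                        - prob_space.expectation \<mu>X (\<lambda>x. K (t - x)))\<^sup>2)"
  proof -
  interpret J: jps M H n X R \<mu> \<mu>X K t
    by (intro jps.intro jps_axioms.intro) (fact assms)+
  show ?thesis by (rule J.main)
qed

end
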